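(* Let $n\ge 6$ with $3\mid n$. Then the metric dimension of $H(n)$ is $n-\frac{n}{3}$.
   Context: For $n\ge 5$, $H(n)$ is the graph with vertex set $V_1\cup V_2$, where $V_1=\{v_1,\dots,v_n\}$ and $V_2=\{v_iv_j: 1\le i<j\le n\}$ (each $v_iv_j$ a single vertex), and where $v_r\in V_1$ is adjacent to $v_iv_j\in V_2$ iff $r=i$ or $r=j$; there are no other edges. $d(u,v)$ is the shortest-path distance. A set $Q$ of vertices is a resolving set of a graph $G$ if any two distinct vertices $x,y$ satisfy $(d(x,q))_{q\in Q}\neq(d(y,q))_{q\in Q}$; the metric dimension is the minimum size of a resolving set. *)

theory Defs
  imports Main
begin

fun walk_len :: "'a set \<Rightarrow> ('a \<Rightarrow> 'a \<Rightarrow> bool) \<Rightarrow> nat \<Rightarrow> 'a \<Rightarrow> 'a \<Rightarrow> bool" where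
  "walk_len V E 0 x y = (x \<in> V \<and> x = y)"
| "walk_len V E (Suc k) x y = (x \<in> V \<and> (\<exists>z\<in>V. E x z \<and> walk_len V E k z y))"

text \<open>Shortest-path distance (only used for connected graphs).\<close>
definition gdist :: "'a set \<Rightarrow> ('a \<Rightarrow> 'a \<Rightarrow> bool) \<Rightarrow> 'a \<Rightarrow> 'a \<Rightarrow> nat" where
  "gdist V E x y = (LEAST k. walk_len V E k x y)"

definition resolving_set :: "'a set \<Rightarrow> ('a \<Rightarrow> 'a \<Rightarrow> bool) \<Rightarrow> 'a set \<Rightarrow> bool" where
  "resolving_set V E Q \<longleftrightarrow> Q \<subseteq> V \<and>
     (\<forall>x\<in>V. \<forall>y\<in>V. x \<noteq> y \<longrightarrow> (\<exists>q\<in>Q. gdist V E x q \<noteq> gdist V E y q))"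

definition metric_dimension :: "'a set \<Rightarrow> ('a \<Rightarrow> 'a \<Rightarrow> bool) \<Rightarrow> nat" where
  "metric_dimension V E = (LEAST k. \<exists>Q. resolving_set V E Q \<and> finite Q \<and> card Q = k)"

datatype hvert = V1 nat | V2 nat nat  \<comment> \<open>V2 i j stands for v_i v_j with i < j\<close>

definition H_verts :: "nat \<Rightarrow> hvert set" where
  "H_verts n = {V1 r | r. 1 \<le> r \<and> r \<le> n} \<union> {V2 i j | i j. 1 \<le> i \<and> i < j \<and> j \<le> n}"

fun H_adj :: "hvert \<Rightarrow> hvert \<Rightarrow> bool" where
  "H_adj (V1 r) (V2 i j) = (r = i \<or> r = j)"
| "H_adj (V2 i j) (V1 r) = (r = i \<or> r = j)"
| "H_adj _ _ = False"

end

theory Submission imports Defs begin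

fun D :: "hvert \<Rightarrow> hvert \<Rightarrow> nat" where
  "D (V1 a) (V1 b) = (if a = b then 0 else 2)"
| "D (V1 a) (V2 i j) = (if a = i \<or> a = j then 1 else 3)"
| "D (V2 i j) (V1 a) = (if a = i \<or> a = j then 1 else 3)"
| "D (V2 i j) (V2 k l) = (if i = k \<and> j = l then 0 else if i = k \<or> i = l \<or> j = k \<or> j = l then 2 else 4)"

lemma D_self[simp]: "D u u = 0"
  by (cases u) auto

lemma D_tri: "H_adj u z \<Longrightarrow> D u w \<le> Suc (D z w)"
  by (cases u; cases z; cases w) auto

lemma walk_lower: "walk_len V H_adj k u w \<Longrightarrow> D u w \<le> k"
proof (induction k arbitrary: u)
  case 0 then show ?case by simp
next
  case (Suc k)
  then obtain z where "H_adj u z" "walk_len V H_adj k z w" by auto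
  with Suc.IH[of z] D_tri[of u z w] show ?case by simp
qed

lemma path1: "x \<in> V \<Longrightarrow> y \<in> V \<Longrightarrow> E x y \<Longrightarrow> walk_len V E 1 x y"
  by auto
lemma path2: "x \<in> V \<Longrightarrow> z \<in> V \<Longrightarrow> y \<in> V \<Longrightarrow> E x z \<Longrightarrow> E z y \<Longrightarrow> walk_len V E 2 x y"
  by (simp add: numeral_eq_Suc) blast
lemma path3: "x \<in> V \<Longrightarrow> z \<in> V \<Longrightarrow> zb \<in> V \<Longrightarrow> y \<in> V \<Longrightarrow> E x z \<Longrightarrow> E z zb \<Longrightarrow> E zb y \<Longrightarrow> walk_len V E 3 x y"
  by (simp add: numeral_eq_Suc) blast
lemma path4: "x \<in> V \<Longrightarrow> z \<in> V \<Longrightarrow> zb \<in> V \<Longrightarrow> zc \<in> V \<Longrightarrow> y \<in> V \<Longrightarrow> E x z \<Longrightarrow> E z zb \<Longrightarrow> E zb zc \<Longrightarrow> E zc y \<Longrightarrow> walk_len V E 4 x y"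
  by (simp add: numeral_eq_Suc) blast

definition mk :: "nat \<Rightarrow> nat \<Rightarrow> hvert" where "mk i j = V2 (min i j) (max i j)"

lemma mk_in: "1 \<le> i \<Longrightarrow> i \<le> n \<Longrightarrow> 1 \<le> j \<Longrightarrow> j \<le> n \<Longrightarrow> i \<noteq> j \<Longrightarrow> mk i j \<in> H_verts n"
  unfolding mk_def H_verts_def by (cases "i < j") auto

lemma mk_adj1[simp]: "H_adj (V1 i) (mk i j)" "H_adj (V1 j) (mk i j)"
  "H_adj (mk i j) (V1 i)" "H_adj (mk i j) (V1 j)"
  unfolding mk_def by (auto simp: min_def max_def)

lemma V1_in: "V1 a \<in> H_verts n \<longleftrightarrow> 1 \<le> a \<and> a \<le> n"
  unfolding H_verts_def by auto

lemma V2_in: "V2 i j \<in> H_verts n \<longleftrightarrow> 1 \<le> i \<and> i < j \<and> j \<le> n"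
  unfolding H_verts_def by auto

lemma walk_upper:
  assumes u: "u \<in> H_verts n" and w: "w \<in> H_verts n"
  shows "walk_len (H_verts n) H_adj (D u w) u w"
proof (cases u)
  case (V1 a)
  note ua = V1
  show ?thesis
  proof (cases w)
    case (V1 b)
    show ?thesis
    proof (cases "a = b")
      case True then show ?thesis using u ua V1 by simp
    next
      case False
      have "mk a b \<in> H_verts n" using u w ua V1 False by (intro mk_in) (auto simp: V1_in)
      then show ?thesis using u w ua V1 False
        by (auto intro!: path2[where z="mk a b"])
    qed
  next
    case (V2 i j)
    show ?thesis
    proof (cases "a = i \<or> a = j")
      case True then show ?thesis using u w ua V2
        by (auto intro!: path1)
    next
      case False
      have "mk a i \<in> H_verts n" using u w ua V2 False by (intro mk_in) (auto simp: V1_in V2_in)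
      moreover have "V1 i \<in> H_verts n" using w V2 by (auto simp: V1_in V2_in)
      ultimately show ?thesis using u w ua V2 False
        by (auto intro!: path3[where z="mk a i" and zb="V1 i"])
    qed
  qed
next
  case (V2 i j)
  note ua = V2
  have vi: "V1 i \<in> H_verts n" "V1 j \<in> H_verts n" using u ua by (auto simp: V1_in V2_in)
  show ?thesis
  proof (cases w)
    case (V1 b)
    show ?thesis
    proof (cases "b = i \<or> b = j")
      case True then show ?thesis using u w ua V1
        by (auto intro!: path1)
    next
      case False
      have "mk i b \<in> H_verts n" using u w ua V1 False by (intro mk_in) (auto simp: V1_in V2_in)
      then show ?thesis using u w ua V1 False vi
        by (auto intro!: path3[where z="V1 i" and zb="mk i b"])
    qed
  next
    case (V2 k l)
    have vk: "V1 k \<in> H_verts n" "V1 l \<in> H_verts n" using w V2 by (auto simp: V1_in V2_in)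
    consider "i = k \<and> j = l" | "\<not> (i = k \<and> j = l)" "i = k \<or> i = l" | "\<not> (i = k \<and> j = l)" "j = k \<or> j = l" 
      | "\<not> (i = k \<or> i = l \<or> j = k \<or> j = l)" by blast
    then show ?thesis
    proof cases
      case 1 then show ?thesis using u ua V2 by simp
    next
      case 2 then show ?thesis using u w ua V2 vi
        by (auto intro!: path2[where z="V1 i"])
    next
      case 3 then show ?thesis using u w ua V2 vi
        by (auto intro!: path2[where z="V1 j"])
    next
      case 4
      have "mk i k \<in> H_verts n" using u w ua V2 4 by (intro mk_in) (auto simp: V1_in V2_in)
      then show ?thesis using u w ua V2 vi vk 4
        by (auto intro!: path4[where z="V1 i" and zb="mk i k" and zc="V1 k"])
    qed
  qed
qed

lemma gdist_D: "u \<in> H_verts n \<Longrightarrow> w \<in> H_verts n \<Longrightarrow> gdist (H_verts n) H_adj u w = D u w"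
  unfolding gdist_def
  by (rule Least_equality) (auto intro: walk_upper walk_lower)


lemma lower:
  assumes R: "resolving_set (H_verts n) H_adj Q" and fin: "finite Q"
  shows "2 * (n - 1) \<le> 3 * card Q"
proof -
  have QV: "Q \<subseteq> H_verts n" using R unfolding resolving_set_def by auto
  define S where "S x = {q\<in>Q. \<exists>i j. q = V2 i j \<and> (x = i \<or> x = j)}" for x
  have dist: "\<exists>q\<in>Q. (q \<in> S x) \<noteq> (q \<in> S y)"
    if xy: "1 \<le> x" "x \<le> n" "1 \<le> y" "y \<le> n" "x \<noteq> y" "V1 x \<notin> Q" "V1 y \<notin> Q" for x y
  proof -
    have "V1 x \<in> H_verts n" "V1 y \<in> H_verts n" using xy by (auto simp: V1_in)
    with R xy obtain q where q: "q \<in> Q" "gdist (H_verts n) H_adj (V1 x) q \<noteq> gdist (H_verts n) H_adj (V1 y) q"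
      unfolding resolving_set_def by blast
    then have "D (V1 x) q \<noteq> D (V1 y) q" using QV gdist_D \<open>V1 x \<in> H_verts n\<close> \<open>V1 y \<in> H_verts n\<close> by auto
    then show ?thesis
    proof (cases q)
      case (V1 a)
      then show ?thesis using q xy \<open>D (V1 x) q \<noteq> D (V1 y) q\<close> by (auto split: if_splits)
    next
      case (V2 i j)
      then have "(x = i \<or> x = j) \<noteq> (y = i \<or> y = j)" using \<open>D (V1 x) q \<noteq> D (V1 y) q\<close>
        by (auto split: if_splits)
      then have "(q \<in> S x) \<noteq> (q \<in> S y)" unfolding S_def using q V2 by auto
      then show ?thesis using q by blast
    qed
  qed
  define tok where "tok x q = (case q of V1 a \<Rightarrow> if a = x then 2 else 0
     | V2 i j \<Rightarrow> if x = i \<or> x = j then (if V1 x \<notin> Q \<and> S x = {q} then 2 else 1) else (0::nat))" for x q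
  define X where "X = {1..n}"
  have finX: "finite X" unfolding X_def by simp
  have up: "(\<Sum>x\<in>X. tok x q) \<le> 3" if qQ: "q \<in> Q" for q
  proof (cases q)
    case (V1 a)
    have "(\<Sum>x\<in>X. tok x q) = (\<Sum>x\<in>X. if x = a then 2 else 0)"
      by (rule sum.cong) (auto simp: tok_def V1)
    also have "\<dots> \<le> 2" using finX by (simp add: sum.delta)
    finally show ?thesis by simp
  next
    case (V2 i j)
    have ij: "1 \<le> i" "i < j" "j \<le> n" using QV qQ V2 by (auto simp: V2_in)
    have "(\<Sum>x\<in>X. tok x q) = (\<Sum>x\<in>X\<inter>{i,j}. tok x q)"
      by (rule sum.mono_neutral_right) (auto simp: tok_def V2 finX)
    also have "\<dots> \<le> (\<Sum>x\<in>{i,j}. tok x q)" by (rule sum_mono2) auto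
    also have "\<dots> = tok i q + tok j q" using ij by simp
    also have "\<dots> \<le> 3"
    proof -
      have a: "tok i q \<le> 2" "tok j q \<le> 2" by (auto simp: tok_def V2)
      have "\<not> (tok i q = 2 \<and> tok j q = 2)"
      proof
        assume "tok i q = 2 \<and> tok j q = 2"
        then have b: "V1 i \<notin> Q" "S i = {q}" "V1 j \<notin> Q" "S j = {q}"
          by (auto simp: tok_def V2 split: if_splits)
        from dist[of i j] ij b obtain q' where "q' \<in> Q" "(q' \<in> S i) \<noteq> (q' \<in> S j)" by auto
        with b show False by auto
      qed
      with a show ?thesis by linarith
    qed
    finally show ?thesis .
  qed
  define Bad where "Bad = {x\<in>X. V1 x \<notin> Q \<and> S x = {}}"
  have low: "2 \<le> (\<Sum>q\<in>Q. tok x q)" if xX: "x \<in> X" "x \<notin> Bad" for x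
  proof (cases "V1 x \<in> Q")
    case True
    have "tok x (V1 x) \<le> (\<Sum>q\<in>Q. tok x q)" using member_le_sum[of "V1 x" Q "tok x"] True fin by auto
    then show ?thesis by (simp add: tok_def)
  next
    case False
    then have "S x \<noteq> {}" using xX by (auto simp: Bad_def)
    then obtain q where q: "q \<in> S x" by auto
    have Sx: "\<exists>i j. r = V2 i j \<and> (x = i \<or> x = j)" "r \<in> Q" if "r \<in> S x" for r
      using that unfolding S_def by blast+
    have tk: "tok x r = (if S x = {r} then 2 else 1)" if rS: "r \<in> S x" for r
    proof -
      obtain i j where "r = V2 i j" "x = i \<or> x = j" using Sx(1)[OF rS] by blast
      then show ?thesis using False unfolding tok_def by simp
    qed
    show ?thesis
    proof (cases "S x = {q}")
      case True
      have "tok x q \<le> (\<Sum>q\<in>Q. tok x q)" using member_le_sum[of q Q "tok x"] Sx(2)[OF q] fin by auto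
      moreover have "tok x q = 2" using tk[OF q] True by simp
      ultimately show ?thesis by simp
    next
      case nq: False
      then obtain q' where q': "q' \<in> S x" "q' \<noteq> q" using q by blast
      have t1: "tok x q = 1" using tk[OF q] nq by simp
      have t2: "tok x q' = 1"
      proof -
        have "S x \<noteq> {q'}" using q q' by auto
        then show ?thesis using tk[OF q'(1)] by simp
      qed
      have "(\<Sum>r\<in>{q,q'}. tok x r) \<le> (\<Sum>r\<in>Q. tok x r)"
        by (rule sum_mono2) (use fin Sx(2)[OF q] Sx(2)[OF q'(1)] in auto)
      then show ?thesis using t1 t2 q' by simp
    qed
  qed
  have bad: "card Bad \<le> 1"
  proof -
    have "\<forall>x\<in>Bad. \<forall>y\<in>Bad. x = y"
    proof (intro ballI, rule ccontr)
      fix x y assume "x \<in> Bad" "y \<in> Bad" "x \<noteq> y"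
      then show False using dist[of x y] by (auto simp: Bad_def X_def)
    qed
    then show ?thesis using card_le_Suc0_iff_eq[of Bad] finX by (simp add: Bad_def)
  qed
  have "card (X - Bad) = n - card Bad"
    by (subst card_Diff_subset) (auto simp: Bad_def X_def)
  then have "2 * (n - 1) \<le> (\<Sum>x\<in>X - Bad. 2)" using bad by simp
  also have "\<dots> \<le> (\<Sum>x\<in>X - Bad. \<Sum>q\<in>Q. tok x q)" by (rule sum_mono) (use low in auto)
  also have "\<dots> \<le> (\<Sum>x\<in>X. \<Sum>q\<in>Q. tok x q)" by (rule sum_mono2) (use finX in auto)
  also have "\<dots> = (\<Sum>q\<in>Q. \<Sum>x\<in>X. tok x q)" by (rule sum.swap)
  also have "\<dots> \<le> (\<Sum>q\<in>Q. 3)" by (rule sum_mono) (use up in auto)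
  also have "\<dots> = 3 * card Q" by simp
  finally show ?thesis .
qed


lemma ifeq: "(A \<longrightarrow> B) \<Longrightarrow> (C \<longrightarrow> D') \<Longrightarrow>
  ((if A then 0 else if B then 2 else 4::nat) = (if C then 0 else if D' then 2 else 4)) = ((A = C) \<and> (B = D'))"
  by auto
lemma dm: "(c::nat) < 3 \<Longrightarrow> ((x::nat) = 3*t + c) = (x div 3 = t \<and> x mod 3 = c)"
proof
  assume "c < 3" "x = 3*t+c" then show "x div 3 = t \<and> x mod 3 = c" by simp
next
  assume "x div 3 = t \<and> x mod 3 = c" then show "x = 3*t+c" using div_mult_mod_eq[of x 3] by simp
qed
lemma e1: "(p::nat) < 3 \<Longrightarrow> (3*a+p+1 = 3*t+1) = (a = t \<and> p = 0)"
  using dm[of 0 "3*a+p" t] by auto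
lemma e2: "(p::nat) < 3 \<Longrightarrow> (3*a+p+1 = 3*t+2) = (a = t \<and> p = 1)"
  using dm[of 1 "3*a+p" t] by auto
lemma e3: "(p::nat) < 3 \<Longrightarrow> (3*a+p+1 = 3*t+3) = (a = t \<and> p = 2)"
  using dm[of 2 "3*a+p" t] by auto

definition LL :: "nat \<Rightarrow> hvert" where "LL t = V2 (3*t+1) (3*t+2)"
definition RR :: "nat \<Rightarrow> hvert" where "RR t = V2 (3*t+2) (3*t+3)"

lemma Hconv:
  fixes ti pi tj pj tk pk tl pl :: nat
  assumes p: "pi < 3" "pj < 3" "pk < 3" "pl < 3"
  and h: "D (V2 (3*ti+pi+1) (3*tj+pj+1)) (LL t) = D (V2 (3*tk+pk+1) (3*tl+pl+1)) (LL t)"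
         "D (V2 (3*ti+pi+1) (3*tj+pj+1)) (RR t) = D (V2 (3*tk+pk+1) (3*tl+pl+1)) (RR t)"
  shows "((ti = t \<and> pi = 0 \<and> tj = t \<and> pj = 1) = (tk = t \<and> pk = 0 \<and> tl = t \<and> pl = 1)) \<and>
     ((ti = t \<and> pi \<le> 1 \<or> tj = t \<and> pj \<le> 1) = (tk = t \<and> pk \<le> 1 \<or> tl = t \<and> pl \<le> 1)) \<and>
     ((ti = t \<and> pi = 1 \<and> tj = t \<and> pj = 2) = (tk = t \<and> pk = 1 \<and> tl = t \<and> pl = 2)) \<and>
     ((ti = t \<and> 1 \<le> pi \<or> tj = t \<and> 1 \<le> pj) = (tk = t \<and> 1 \<le> pk \<or> tl = t \<and> 1 \<le> pl))"
proof -
  have a: "(ti = t \<and> pi = 0 \<and> tj = t \<and> pj = 1) = (tk = t \<and> pk = 0 \<and> tl = t \<and> pl = 1) \<and>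
    (ti = t \<and> pi = 0 \<or> ti = t \<and> pi = 1 \<or> tj = t \<and> pj = 0 \<or> tj = t \<and> pj = 1) = (tk = t \<and> pk = 0 \<or> tk = t \<and> pk = 1 \<or> tl = t \<and> pl = 0 \<or> tl = t \<and> pl = 1)"
    using h(1) p unfolding LL_def D.simps e1[OF p(1)] e1[OF p(2)] e1[OF p(3)] e1[OF p(4)]
      e2[OF p(1)] e2[OF p(2)] e2[OF p(3)] e2[OF p(4)]
    by (subst (asm) ifeq) auto
  have b: "(ti = t \<and> pi = 1 \<and> tj = t \<and> pj = 2) = (tk = t \<and> pk = 1 \<and> tl = t \<and> pl = 2) \<and>
    (ti = t \<and> pi = 1 \<or> ti = t \<and> pi = 2 \<or> tj = t \<and> pj = 1 \<or> tj = t \<and> pj = 2) = (tk = t \<and> pk = 1 \<or> tk = t \<and> pk = 2 \<or> tl = t \<and> pl = 1 \<or> tl = t \<and> pl = 2)"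
    using h(2) p unfolding RR_def D.simps e3[OF p(1)] e3[OF p(2)] e3[OF p(3)] e3[OF p(4)]
      e2[OF p(1)] e2[OF p(2)] e2[OF p(3)] e2[OF p(4)]
    by (subst (asm) ifeq) auto
  have q1: "(ti = t \<and> pi \<le> 1 \<or> tj = t \<and> pj \<le> 1) = (ti = t \<and> pi = 0 \<or> ti = t \<and> pi = 1 \<or> tj = t \<and> pj = 0 \<or> tj = t \<and> pj = 1)"
    "(tk = t \<and> pk \<le> 1 \<or> tl = t \<and> pl \<le> 1) = (tk = t \<and> pk = 0 \<or> tk = t \<and> pk = 1 \<or> tl = t \<and> pl = 0 \<or> tl = t \<and> pl = 1)"
    by auto
  have q2: "(ti = t \<and> 1 \<le> pi \<or> tj = t \<and> 1 \<le> pj) = (ti = t \<and> pi = 1 \<or> ti = t \<and> pi = 2 \<or> tj = t \<and> pj = 1 \<or> tj = t \<and> pj = 2)"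
    "(tk = t \<and> 1 \<le> pk \<or> tl = t \<and> 1 \<le> pl) = (tk = t \<and> pk = 1 \<or> tk = t \<and> pk = 2 \<or> tl = t \<and> pl = 1 \<or> tl = t \<and> pl = 2)"
    using p by auto
  show ?thesis unfolding q1 q2 using a b by (simp only:)
qed
lemma core:
  fixes ti pi tj pj tk pk tl pl :: nat
  assumes p: "pi < 3" "pj < 3" "pk < 3" "pl < 3"
  and o: "ti < tj \<or> (ti = tj \<and> pi < pj)" "tk < tl \<or> (tk = tl \<and> pk < pl)"
  and H: "\<And>t. t \<in> {ti,tj,tk,tl} \<Longrightarrow>
     ((ti = t \<and> pi = 0 \<and> tj = t \<and> pj = 1) = (tk = t \<and> pk = 0 \<and> tl = t \<and> pl = 1)) \<and>
     ((ti = t \<and> pi \<le> 1 \<or> tj = t \<and> pj \<le> 1) = (tk = t \<and> pk \<le> 1 \<or> tl = t \<and> pl \<le> 1)) \<and>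
     ((ti = t \<and> pi = 1 \<and> tj = t \<and> pj = 2) = (tk = t \<and> pk = 1 \<and> tl = t \<and> pl = 2)) \<and>
     ((ti = t \<and> 1 \<le> pi \<or> tj = t \<and> 1 \<le> pj) = (tk = t \<and> 1 \<le> pk \<or> tl = t \<and> 1 \<le> pl))"
  shows "ti = tk \<and> pi = pk \<and> tj = tl \<and> pj = pl"
proof -
  have T: "(ti = t \<or> tj = t) = (tk = t \<or> tl = t)" if "t \<in> {ti,tj,tk,tl}" for t
  proof -
    have a: "(ti = t \<and> pi \<le> 1 \<or> tj = t \<and> pj \<le> 1) = (tk = t \<and> pk \<le> 1 \<or> tl = t \<and> pl \<le> 1)"
     and b: "(ti = t \<and> 1 \<le> pi \<or> tj = t \<and> 1 \<le> pj) = (tk = t \<and> 1 \<le> pk \<or> tl = t \<and> 1 \<le> pl)"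
      using H[OF that] by auto
    show ?thesis
    proof
      assume "ti = t \<or> tj = t"
      then show "tk = t \<or> tl = t" using a b by (cases "pi \<le> 1"; cases "pj \<le> 1") auto
    next
      assume "tk = t \<or> tl = t"
      then show "ti = t \<or> tj = t" using a b by (cases "pk \<le> 1"; cases "pl \<le> 1") auto
    qed
  qed
  show ?thesis
  proof (cases "ti = tj")
    case True
    then have "tk = ti" "tl = ti" using T[of ti] T[of tk] T[of tl] by auto
    then show ?thesis using True H[of ti] p o by auto
  next
    case False
    then have lt: "ti < tj" using o by auto
    have "tk = ti \<or> tl = ti" "tk = tj \<or> tl = tj" using T[of ti] T[of tj] by auto
    then have tt: "tk = ti" "tl = tj" using o lt by auto
    have "pi = pk" using H[of ti] lt tt p by auto
    moreover have "pj = pl" using H[of tj] lt tt p by auto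
    ultimately show ?thesis using tt by auto
  qed
qed

lemma V2V2_case:
  assumes ij: "1 \<le> i" "i < j" and kl: "1 \<le> k" "k < l"
  and H: "\<And>t. t \<in> {(i-1) div 3, (j-1) div 3, (k-1) div 3, (l-1) div 3} \<Longrightarrow>
     D (V2 i j) (LL t) = D (V2 k l) (LL t) \<and> D (V2 i j) (RR t) = D (V2 k l) (RR t)"
  shows "i = k \<and> j = l"
proof -
  have dec: "\<exists>a p. x = 3*a+p+1 \<and> p < 3 \<and> (x-1) div 3 = a" if "1 \<le> x" for x :: nat
    using div_mult_mod_eq[of "x-1" 3] that
    by (intro exI[of _ "(x-1) div 3"] exI[of _ "(x-1) mod 3"]) auto
  obtain ti pi where ei: "i = 3*ti+pi+1" "pi < 3" "(i-1) div 3 = ti" using dec ij by blast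
  obtain tj pj where ej: "j = 3*tj+pj+1" "pj < 3" "(j-1) div 3 = tj" using dec[of j] ij by auto
  obtain tk pk where ek: "k = 3*tk+pk+1" "pk < 3" "(k-1) div 3 = tk" using dec kl by blast
  obtain tl pl where el: "l = 3*tl+pl+1" "pl < 3" "(l-1) div 3 = tl" using dec[of l] kl by auto
  have ord: "a < b \<or> (a = b \<and> c < d)" if "3*a+c+1 < 3*b+d+1" "c < 3" "d < 3" for a b c d :: nat
  proof (rule ccontr)
    assume "\<not> ?thesis"
    then have "b < a \<or> (a = b \<and> d \<le> c)" by auto
    then show False using that by (elim disjE) linarith+
  qed
  have o: "ti < tj \<or> (ti = tj \<and> pi < pj)" "tk < tl \<or> (tk = tl \<and> pk < pl)"
    using ord[of ti pi tj pj] ord[of tk pk tl pl] ij kl ei ej ek el by auto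
  have p: "pi < 3" "pj < 3" "pk < 3" "pl < 3" using ei ej ek el by auto
  have H': "((ti = t \<and> pi = 0 \<and> tj = t \<and> pj = 1) = (tk = t \<and> pk = 0 \<and> tl = t \<and> pl = 1)) \<and>
     ((ti = t \<and> pi \<le> 1 \<or> tj = t \<and> pj \<le> 1) = (tk = t \<and> pk \<le> 1 \<or> tl = t \<and> pl \<le> 1)) \<and>
     ((ti = t \<and> pi = 1 \<and> tj = t \<and> pj = 2) = (tk = t \<and> pk = 1 \<and> tl = t \<and> pl = 2)) \<and>
     ((ti = t \<and> 1 \<le> pi \<or> tj = t \<and> 1 \<le> pj) = (tk = t \<and> 1 \<le> pk \<or> tl = t \<and> 1 \<le> pl))"
    if "t \<in> {ti,tj,tk,tl}" for t
  proof -
    have "t \<in> {(i-1) div 3, (j-1) div 3, (k-1) div 3, (l-1) div 3}"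
      using that ei(3) ej(3) ek(3) el(3) by simp
    from H[OF this] have h: "D (V2 i j) (LL t) = D (V2 k l) (LL t)" "D (V2 i j) (RR t) = D (V2 k l) (RR t)"
      by auto
    show ?thesis by (rule Hconv[OF p h[unfolded ei(1) ej(1) ek(1) el(1)]])
  qed
  have "ti = tk \<and> pi = pk \<and> tj = tl \<and> pj = pl"
    by (rule core[OF p o H'])
  then show ?thesis using ei ej ek el by simp
qed

lemma upper:
  assumes n: "n = 3 * m" and m: "m \<ge> 1"
  shows "resolving_set (H_verts n) H_adj (LL ` {..<m} \<union> RR ` {..<m})"
    and "card (LL ` {..<m} \<union> RR ` {..<m}) = 2 * m"
proof -
  let ?Q = "LL ` {..<m} \<union> RR ` {..<m}"
  have QV: "?Q \<subseteq> H_verts n" using n by (auto simp: LL_def RR_def V2_in)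
  show "card ?Q = 2 * m"
  proof -
    have "inj_on LL {..<m}" "inj_on RR {..<m}" by (auto simp: inj_on_def LL_def RR_def)
    moreover have "LL ` {..<m} \<inter> RR ` {..<m} = {}" by (auto simp: LL_def RR_def) presburger
    ultimately show ?thesis by (simp add: card_Un_disjoint card_image)
  qed
  show "resolving_set (H_verts n) H_adj ?Q"
    unfolding resolving_set_def
  proof (intro conjI QV ballI impI)
    fix u w assume u: "u \<in> H_verts n" and w: "w \<in> H_verts n" and uw: "u \<noteq> w"
    show "\<exists>q\<in>?Q. gdist (H_verts n) H_adj u q \<noteq> gdist (H_verts n) H_adj w q"
    proof (rule ccontr)
      assume "\<not> ?thesis"
      then have A: "\<forall>q\<in>?Q. D u q = D w q" using QV u w gdist_D by (metis subsetD)
      then have H: "D u (LL t) = D w (LL t) \<and> D u (RR t) = D w (RR t)" if "t < m" for t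
        using that by auto
      show False
      proof (cases u)
        case (V1 a)
        note ua = V1
        show False
        proof (cases w)
          case (V1 b)
          define t where "t = (a - 1) div 3"
          have a1: "1 \<le> a" "a \<le> n" using u ua by (auto simp: V1_in)
          have tm: "t < m" using a1 n unfolding t_def by auto
          have r: "3*t+1 \<le> a" "a \<le> 3*t+3" using a1 unfolding t_def by auto
          have if13: "((if A then 1 else 3::nat) = (if B then 1 else 3)) = (A = B)" for A B by auto
          have h1: "(a = 3*t+1 \<or> a = 3*t+2) = (b = 3*t+1 \<or> b = 3*t+2)"
             and h2: "(a = 3*t+2 \<or> a = 3*t+3) = (b = 3*t+2 \<or> b = 3*t+3)"
            using H[OF tm] unfolding ua V1 LL_def RR_def D.simps if13 by blast+
          have "a = 3*t+1 \<or> a = 3*t+2 \<or> a = 3*t+3" using r by linarith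
          then have "a = b"
          proof (elim disjE)
            assume a: "a = 3*t+1"
            then have "b = 3*t+1 \<or> b = 3*t+2" "\<not> (b = 3*t+2 \<or> b = 3*t+3)" using h1 h2 by simp_all
            then show "a = b" using a by linarith
          next
            assume a: "a = 3*t+2"
            then have "b = 3*t+1 \<or> b = 3*t+2" "b = 3*t+2 \<or> b = 3*t+3" using h1 h2 by simp_all
            then show "a = b" using a by linarith
          next
            assume a: "a = 3*t+3"
            then have "\<not> (b = 3*t+1 \<or> b = 3*t+2)" "b = 3*t+2 \<or> b = 3*t+3" using h1 h2 by simp_all
            then show "a = b" using a by linarith
          qed
          then show False using uw ua V1 by simp
        next
          case (V2 i j)
          from H[of 0] m ua V2 show False by (auto simp: LL_def split: if_splits)
        qed
      next
        case (V2 i j)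
        note ua = V2
        show False
        proof (cases w)
          case (V1 b)
          from H[of 0] m ua V1 show False by (auto simp: LL_def split: if_splits)
        next
          case (V2 k l)
          have ij: "1 \<le> i" "i < j" "j \<le> n" using u ua by (auto simp: V2_in)
          have kl: "1 \<le> k" "k < l" "l \<le> n" using w V2 by (auto simp: V2_in)
          have "i = k \<and> j = l"
          proof (rule V2V2_case[OF ij(1,2) kl(1,2)])
            fix t assume "t \<in> {(i-1) div 3, (j-1) div 3, (k-1) div 3, (l-1) div 3}"
            then have "t < m" using ij kl n by auto
            then show "D (V2 i j) (LL t) = D (V2 k l) (LL t) \<and> D (V2 i j) (RR t) = D (V2 k l) (RR t)"
              using H ua V2 by auto
          qed
          then show False using uw ua V2 by simp
        qed
      qed
    qed
  qed
qed

theorem theorem3p7: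
  fixes n :: nat
  assumes "n \<ge> 6" and "3 dvd n"
  shows "metric_dimension (H_verts n) H_adj = n - n div 3"
proof -
  obtain m where n: "n = 3 * m" using assms(2) by blast
  have m: "m \<ge> 1" using assms(1) n by auto
  have e: "n - n div 3 = 2 * m" using n by simp
  show ?thesis
    unfolding metric_dimension_def e
  proof (rule Least_equality)
    show "\<exists>Q. resolving_set (H_verts n) H_adj Q \<and> finite Q \<and> card Q = 2 * m"
      using upper[OF n m] by blast
  next
    fix k assume "\<exists>Q. resolving_set (H_verts n) H_adj Q \<and> finite Q \<and> card Q = k"
    then obtain Q where "resolving_set (H_verts n) H_adj Q" "finite Q" "card Q = k" by blast
    then have "2 * (n - 1) \<le> 3 * k" using lower by blast
    then show "2 * m \<le> k" using n m by linarith
  qed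
qed

end
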